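(* In the setting below (Algorithm 1), (i) truthful reporting is a Nash equilibrium: for every agent $i\in[m]$ and every strategy $f_i$, $$\mathbb E\big[L_i(\mathrm{id},\dots,\mathrm{id})\big]\le \mathbb E\big[L_i(f_i,(\mathrm{id})_{j\neq i})\big].$$ (ii) If moreover $\Pi$ is not degenerate, then "more data is strictly better": when all agents are truthful, for every agent $i$, every choice of sample sizes $(n_j)_{j\ne i}$ and all $n_i<n_i'$, the expected loss of agent $i$ when holding (and truthfully submitting) $n_i'$ points is strictly smaller than when holding $n_i$ points, the other agents' sample sizes being unchanged.
   Context: Setting (Algorithm 1). Fix $m\ge 2$ agents. A prior $\Pi$ is a probability distribution on the set of Borel probability distributions on $\mathbb{R}$. A random distribution $D\sim\Pi$ is drawn; conditionally on $D$, agent $i\in[m]$ holds a dataset $X_i=(X_{i,1},\dots,X_{i,n_i})$ whose entries are i.i.d. from $D$, independent across agents (one may regard $X_{i,1},X_{i,2},\dots$ as an infinite conditionally i.i.d. sequence of which the agent holds the first $n_i$). A strategy is a measurable map $f:\bigcup_{\ell\ge0}\mathbb{R}^\ell\to\bigcup_{\ell\ge0}\mathbb{R}^\ell$; agent $i$ submits $X_i'=f_i(X_i)$; the truthful strategy $\mathrm{id}$ is the identity. For a finite nonempty multiset $S\subset\mathbb R$ let $F_S(t)=\frac1{|S|}\sum_{s\in S}\mathbf 1\{s\le t\}$. For integers $k\ge0,r\ge1$ let $h_{k,r}:\mathbb R^{k+1}\to[0,1]$ be measurable such that whenever $D\sim\Pi$ and, conditionally on $D$, $Y_1,\dots,Y_k,T,Z_1,\dots,Z_r$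 are i.i.d. from $D$, one has $h_{k,r}(Y_1,\dots,Y_k,T)=\mathbb E[F_{\{Z_1,\dots,Z_r\}}(T)\mid Y_1,\dots,Y_k,T]$ a.s. Mechanism: for each agent $i$, let $X'_{-i}=\bigcup_{j\ne i}X'_j$ (multiset union, assumed to have at least 2 elements), pick $T_i$ uniformly at random from $X'_{-i}$ independently of everything else, set $Z_i=X'_{-i}\setminus\{T_i\}$, and define the loss $L_i=\big(h_{|X_i'|,|Z_i|}(X_i',T_i)-F_{Z_i}(T_i)\big)^2\in[0,1]$. $L_i(f_1,\dots,f_m)$ denotes the loss when agents use strategies $f_1,\dots,f_m$. Expectations are over $D\sim\Pi$, the data, and all randomness of mechanism and strategies. Degenerate prior: let $D\sim\Pi$ and, conditionally on $D$, $X_1,X_2,\dots,T,Z$ be i.i.d. from $D$. $\Pi$ is degenerate if for some $n\in\mathbb N$, $P(Z\le T\mid T,X_1,\dots,X_n)=P(Z\le T\mid T,X_1,\dots,X_{n+1})$ almost surely. *)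

theory Defs
  imports "HOL-Probability.Probability"
begin

text \<open>Measurable structure on finite real tuples (real lists): the disjoint union
  of the Borel sigma-algebras of the spaces R^l, l = 0,1,2,...\<close>
definition list_borel :: "real list measure" where
  "list_borel = sigma UNIV
     (\<Union>l. (\<lambda>A. {xs. length xs = l \<and> restrict (\<lambda>j. xs ! j) {..<l} \<in> A})
              ` sets (PiM {..<l} (\<lambda>_. (borel :: real measure))))"

definition ecdf :: "real list \<Rightarrow> real \<Rightarrow> real" where
  "ecdf S t = real (length (filter (\<lambda>s. s \<le> t) S)) / real (length S)"

text \<open>Generic "version of a conditional expectation" in the model where D ~ Q and,
  conditionally on D, the coordinates of omega are i.i.d. from D.
  g is a [0,1]-valued measurable function of the coordinates in I, and g of those
  coordinates satisfies the defining property of E[W | coordinates in I].\<close>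
definition is_cond_exp ::
  "real measure measure \<Rightarrow> nat set \<Rightarrow> ((nat \<Rightarrow> real) \<Rightarrow> real) \<Rightarrow> ((nat \<Rightarrow> real) \<Rightarrow> real) \<Rightarrow> bool" where
  "is_cond_exp Q I g W \<longleftrightarrow>
     g \<in> borel_measurable (PiM I (\<lambda>_. (borel :: real measure))) \<and>
     (\<forall>x. g x \<in> {0..1}) \<and>
     (\<forall>B \<in> sets (PiM I (\<lambda>_. (borel :: real measure))).
        (\<integral>D. (\<integral>\<omega>. indicator B (restrict \<omega> I) * g (restrict \<omega> I) \<partial>(PiM UNIV (\<lambda>_::nat. D))) \<partial>Q)
      = (\<integral>D. (\<integral>\<omega>. indicator B (restrict \<omega> I) * W \<omega> \<partial>(PiM UNIV (\<lambda>_::nat. D))) \<partial>Q))"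

definition is_prior :: "real measure measure \<Rightarrow> bool" where
  "is_prior Q \<longleftrightarrow> prob_space Q \<and> sets Q = sets (prob_algebra (borel :: real measure))"

text \<open>h k r : R^(k+1) -> [0,1] (applied to the list Y_1..Y_k,T) is measurable and
  h k r (Y,T) = E[F_Z(T) | Y,T] a.s., with Y = coordinates 0..k-1, T = coordinate k,
  Z = coordinates k+1..k+r.\<close>
definition valid_h :: "real measure measure \<Rightarrow> (nat \<Rightarrow> nat \<Rightarrow> real list \<Rightarrow> real) \<Rightarrow> bool" where
  "valid_h Q h \<longleftrightarrow> (\<forall>k r. r \<ge> 1 \<longrightarrow>
     is_cond_exp Q {..k} (\<lambda>x. h k r (map x [0..<Suc k]))
        (\<lambda>\<omega>. ecdf (map \<omega> [Suc k..<Suc k + r]) (\<omega> k)))"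

text \<open>Degenerate prior: T = coordinate 0, Z = coordinate 1, X_1, X_2, ... = coordinates 2, 3, ...
  For some n, P(Z \<le> T | T, X_1..X_n) = P(Z \<le> T | T, X_1..X_(n+1)) a.s.\<close>
definition degenerate :: "real measure measure \<Rightarrow> bool" where
  "degenerate Q \<longleftrightarrow> (\<exists>n g1 g2.
     is_cond_exp Q (insert 0 {2..<n+2}) g1 (\<lambda>\<omega>. indicator {x. x \<le> \<omega> 0} (\<omega> 1)) \<and>
     is_cond_exp Q (insert 0 {2..<n+3}) g2 (\<lambda>\<omega>. indicator {x. x \<le> \<omega> 0} (\<omega> 1)) \<and>
     (AE D in Q. AE \<omega> in PiM UNIV (\<lambda>_::nat. D).
        g1 (restrict \<omega> (insert 0 {2..<n+2})) = g2 (restrict \<omega> (insert 0 {2..<n+3}))))"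

definition sample :: "(nat \<times> nat \<Rightarrow> real) \<Rightarrow> nat \<Rightarrow> nat \<Rightarrow> real list" where
  "sample \<omega> j l = map (\<lambda>k. \<omega> (j, k)) [0..<l]"

text \<open>Expected (over T uniform in L) loss of an agent submitting Xi, when the other
  agents' pooled submissions are L: T = L!p with p uniform, Z = L without position p.\<close>
definition loss_given :: "(nat \<Rightarrow> nat \<Rightarrow> real list \<Rightarrow> real) \<Rightarrow> real list \<Rightarrow> real list \<Rightarrow> real" where
  "loss_given h Xi L =
     (\<Sum>p<length L. (h (length Xi) (length L - 1) (Xi @ [L ! p])
                       - ecdf (take p L @ drop (Suc p) L) (L ! p))\<^sup>2) / real (length L)"

definition others :: "nat \<Rightarrow> (nat \<Rightarrow> nat) \<Rightarrow> (nat \<Rightarrow> real list \<Rightarrow> real list) \<Rightarrow> nat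
                      \<Rightarrow> (nat \<times> nat \<Rightarrow> real) \<Rightarrow> real list" where
  "others m n f i \<omega> = concat (map (\<lambda>j. f j (sample \<omega> j (n j))) (filter (\<lambda>j. j \<noteq> i) [0..<m]))"

definition exp_loss :: "real measure measure \<Rightarrow> (nat \<Rightarrow> nat \<Rightarrow> real list \<Rightarrow> real) \<Rightarrow> nat
     \<Rightarrow> (nat \<Rightarrow> nat) \<Rightarrow> (nat \<Rightarrow> real list \<Rightarrow> real list) \<Rightarrow> nat \<Rightarrow> real" where
  "exp_loss Q h m n f i =
     (\<integral>D. (\<integral>\<omega>. loss_given h (f i (sample \<omega> i (n i))) (others m n f i \<omega>)
              \<partial>(PiM UNIV (\<lambda>_::nat \<times> nat. D))) \<partial>Q)"

end

theory Submission
  imports Defs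
begin


lemma space_Q_D:
  assumes "D \<in> space (prob_algebra (borel::real measure))"
  shows "prob_space D" "sets D = sets borel" "space D = UNIV"
  using assms sets_eq_imp_space_eq[of D borel] by (auto simp: space_prob_algebra)

lemma kernel_meas:
  "(\<lambda>D. PiM (UNIV::'i set) (\<lambda>_. D)) \<in> prob_algebra (borel::real measure) \<rightarrow>\<^sub>M prob_algebra (PiM UNIV (\<lambda>_. borel::real measure))"
proof (rule measurable_prob_algebra_generated[where \<Omega> = "PiE UNIV (\<lambda>_. UNIV)" and G = "prod_algebra UNIV (\<lambda>_. borel::real measure)"])
  show "sets (PiM UNIV (\<lambda>_. borel::real measure)) = sigma_sets (PiE UNIV (\<lambda>_. UNIV)) (prod_algebra UNIV (\<lambda>_. borel::real measure))"
    by (simp add: sets_PiM)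
  show "Int_stable (prod_algebra UNIV (\<lambda>_. borel::real measure))" by (rule Int_stable_prod_algebra)
  show "prod_algebra UNIV (\<lambda>_. borel::real measure) \<subseteq> Pow (PiE UNIV (\<lambda>_. UNIV))"
    using prod_algebra_sets_into_space[of UNIV "\<lambda>_. borel::real measure"] by simp
  fix a assume a: "a \<in> space (prob_algebra (borel::real measure))"
  show "prob_space (PiM (UNIV::'i set) (\<lambda>_. a))" using space_Q_D[OF a] by (intro prob_space_PiM) auto
  show "sets (PiM (UNIV::'i set) (\<lambda>_. a)) = sets (PiM UNIV (\<lambda>_. borel::real measure))"
    using space_Q_D[OF a] by (intro sets_PiM_cong) auto
next
  fix A assume "A \<in> prod_algebra (UNIV::'i set) (\<lambda>_. borel::real measure)"
  then obtain J E where A: "A = prod_emb UNIV (\<lambda>_. borel::real measure) J (\<Pi>\<^sub>E j\<in>J. E j)"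
    and J: "finite J" and E: "\<And>i. i \<in> J \<Longrightarrow> E i \<in> sets borel"
    by (rule prod_algebraE) auto
  have "(\<lambda>a. \<Prod>j\<in>J. emeasure a (E j)) \<in> borel_measurable (prob_algebra (borel::real measure))"
    using E unfolding prob_algebra_def
    by (intro borel_measurable_prod_ennreal measurable_restrict_space1 measurable_emeasure_subprob_algebra) auto
  then show "(\<lambda>a. emeasure (PiM UNIV (\<lambda>_. a)) A) \<in> borel_measurable (prob_algebra (borel::real measure))"
  proof (rule measurable_cong[THEN iffD1, rotated])
    fix a assume a: "a \<in> space (prob_algebra (borel::real measure))"
    have "A = prod_emb UNIV (\<lambda>_. a) J (\<Pi>\<^sub>E j\<in>J. E j)"
      unfolding A prod_emb_def using space_Q_D[OF a] by simp
    then show "(\<Prod>j\<in>J. emeasure a (E j)) = emeasure (PiM UNIV (\<lambda>_. a)) A"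
      using space_Q_D[OF a] J E by (simp add: emeasure_PiM_emb)
  qed
qed



definition PP :: "real measure measure \<Rightarrow> ('i \<Rightarrow> real) measure" where
  "PP Q = Q \<bind> (\<lambda>D. PiM UNIV (\<lambda>_. D))"

lemma kernel_meas_Q:
  assumes "is_prior Q"
  shows "(\<lambda>D. PiM (UNIV::'i set) (\<lambda>_. D)) \<in> Q \<rightarrow>\<^sub>M subprob_algebra (PiM UNIV (\<lambda>_. borel::real measure))"
  using measurable_prob_algebraD[OF kernel_meas] assms unfolding is_prior_def
  by (subst measurable_cong_sets[where M'="prob_algebra borel" and N'="subprob_algebra (PiM UNIV (\<lambda>_. borel::real measure))"]) auto

lemma PP_props:
  assumes "is_prior Q"
  shows "prob_space (PP Q :: ('i \<Rightarrow> real) measure)" "sets (PP Q :: ('i \<Rightarrow> real) measure) = sets (PiM UNIV (\<lambda>_. borel))"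
    "space (PP Q :: ('i \<Rightarrow> real) measure) = UNIV"
proof -
  have Q: "Q \<in> space (prob_algebra (prob_algebra (borel::real measure)))"
    using assms unfolding is_prior_def by (simp add: space_prob_algebra)
  show "prob_space (PP Q :: ('i \<Rightarrow> real) measure)" unfolding PP_def by (rule prob_space_bind'[OF Q kernel_meas])
  show s: "sets (PP Q :: ('i \<Rightarrow> real) measure) = sets (PiM UNIV (\<lambda>_. borel))" unfolding PP_def by (rule sets_bind'[OF Q kernel_meas])
  show "space (PP Q :: ('i \<Rightarrow> real) measure) = UNIV" using sets_eq_imp_space_eq[OF s] by (simp add: space_PiM)
qed

lemma NI_eq:
  fixes F :: "('i \<Rightarrow> real) \<Rightarrow> real"
  assumes "is_prior Q" and F: "F \<in> borel_measurable (PiM UNIV (\<lambda>_. borel))" and c: "\<And>x. \<bar>F x\<bar> \<le> c"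
  shows "(\<integral>D. (\<integral>\<omega>. F \<omega> \<partial>PiM UNIV (\<lambda>_. D)) \<partial>Q) = (\<integral>\<omega>. F \<omega> \<partial>PP Q)"
    and "integrable (PP Q) F"
proof -
  have fin: "finite_measure Q" using assms(1) unfolding is_prior_def by (auto intro: prob_space.finite_measure)
  have ae: "AE x in Q. emeasure (PiM (UNIV::'i set) (\<lambda>_. x)) (space (PiM UNIV (\<lambda>_. x))) \<le> ennreal 1"
  proof (rule AE_I2)
    fix x assume "x \<in> space Q"
    then have "x \<in> space (prob_algebra (borel::real measure))" using assms(1) unfolding is_prior_def
      using sets_eq_imp_space_eq by blast
    then have "prob_space (PiM (UNIV::'i set) (\<lambda>_. x))" using space_Q_D by (intro prob_space_PiM) auto
    then show "emeasure (PiM (UNIV::'i set) (\<lambda>_. x)) (space (PiM UNIV (\<lambda>_. x))) \<le> ennreal 1"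
      by (simp add: prob_space.emeasure_space_1)
  qed
  show "(\<integral>D. (\<integral>\<omega>. F \<omega> \<partial>PiM UNIV (\<lambda>_. D)) \<partial>Q) = (\<integral>\<omega>. F \<omega> \<partial>PP Q)"
    unfolding PP_def using integral_bind[OF F _ kernel_meas_Q[OF assms(1)] fin ae] c
    by (metis)
  show "integrable (PP Q) F"
    unfolding PP_def using integrable_bind[OF F _ kernel_meas_Q[OF assms(1)] fin ae] c
    by (metis)
qed

lemma ortho_ext:
  fixes P :: "(nat \<Rightarrow> real) measure" and g W \<phi> :: "_ \<Rightarrow> real"
  assumes P: "prob_space P" and sP: "sets P = sets (PiM UNIV (\<lambda>_. borel))"
    and g: "g \<in> borel_measurable (PiM I (\<lambda>_. borel))" and g01: "\<And>x. g x \<in> {0..1}"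
    and W: "W \<in> borel_measurable (PiM UNIV (\<lambda>_. borel))" and W01: "\<And>x. W x \<in> {0..1}"
    and eq: "\<And>B. B \<in> sets (PiM I (\<lambda>_. borel)) \<Longrightarrow>
      (\<integral>\<omega>. indicator B (restrict \<omega> I) * g (restrict \<omega> I) \<partial>P) = (\<integral>\<omega>. indicator B (restrict \<omega> I) * W \<omega> \<partial>P)"
    and phi: "\<phi> \<in> borel_measurable (PiM I (\<lambda>_. borel))" and c: "\<And>y. \<bar>\<phi> y\<bar> \<le> c"
  shows "(\<integral>\<omega>. \<phi> (restrict \<omega> I) * g (restrict \<omega> I) \<partial>P) = (\<integral>\<omega>. \<phi> (restrict \<omega> I) * W \<omega> \<partial>P)"
proof -
  interpret prob_space P by fact
  have R: "(\<lambda>\<omega>. restrict \<omega> I) \<in> P \<rightarrow>\<^sub>M PiM I (\<lambda>_. borel::real measure)"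
    using measurable_restrict_subset[of I UNIV "\<lambda>_. borel::real measure"] sP
    by (simp cong: measurable_cong_sets)
  have gm: "(\<lambda>\<omega>. g (restrict \<omega> I)) \<in> borel_measurable P" using g R by measurable
  have Wm: "W \<in> borel_measurable P" using W sP by (simp cong: measurable_cong_sets)
  have pm: "(\<lambda>\<omega>. \<phi> (restrict \<omega> I)) \<in> borel_measurable P" using phi R by measurable
  define M1 where "M1 = distr (density P (\<lambda>\<omega>. ennreal (g (restrict \<omega> I)))) (PiM I (\<lambda>_. borel::real measure)) (\<lambda>\<omega>. restrict \<omega> I)"
  define M2 where "M2 = distr (density P (\<lambda>\<omega>. ennreal (W \<omega>))) (PiM I (\<lambda>_. borel::real measure)) (\<lambda>\<omega>. restrict \<omega> I)"
  have R1: "(\<lambda>\<omega>. restrict \<omega> I) \<in> density P f \<rightarrow>\<^sub>M PiM I (\<lambda>_. borel::real measure)" for f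
    using R by (simp cong: measurable_cong_sets)
  have em: "emeasure (density P (\<lambda>\<omega>. ennreal (G \<omega>))) ((\<lambda>\<omega>. restrict \<omega> I) -` B \<inter> space P)
       = ennreal (\<integral>\<omega>. indicator B (restrict \<omega> I) * G \<omega> \<partial>P)"
    if B: "B \<in> sets (PiM I (\<lambda>_. borel))" and G: "G \<in> borel_measurable P" and G01: "\<And>x. G x \<in> {0..1}" for G B
  proof -
    have pre: "(\<lambda>\<omega>. restrict \<omega> I) -` B \<inter> space P \<in> sets P" using R B by measurable
    have "emeasure (density P (\<lambda>\<omega>. ennreal (G \<omega>))) ((\<lambda>\<omega>. restrict \<omega> I) -` B \<inter> space P)
       = (\<integral>\<^sup>+ \<omega>. ennreal (G \<omega>) * indicator ((\<lambda>\<omega>. restrict \<omega> I) -` B \<inter> space P) \<omega> \<partial>P)"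
      using G pre by (subst emeasure_density) auto
    also have "\<dots> = (\<integral>\<^sup>+ \<omega>. ennreal (indicator B (restrict \<omega> I) * G \<omega>) \<partial>P)"
      by (intro nn_integral_cong) (auto simp: indicator_def)
    also have "\<dots> = ennreal (\<integral>\<omega>. indicator B (restrict \<omega> I) * G \<omega> \<partial>P)"
    proof (rule nn_integral_eq_integral)
      show "integrable P (\<lambda>\<omega>. indicator B (restrict \<omega> I) * G \<omega>)"
        using G01 B R G by (intro integrable_const_bound[where B=1]) (auto simp: indicator_def)
      show "AE x in P. 0 \<le> indicator B (restrict x I) * G x" using G01 by auto
    qed
    finally show ?thesis .
  qed
  have "M1 = M2"
  proof (rule measure_eqI)
    show "sets M1 = sets M2" by (simp add: M1_def M2_def)
    fix B assume "B \<in> sets M1"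
    then have B: "B \<in> sets (PiM I (\<lambda>_. borel))" by (simp add: M1_def)
    have "emeasure M1 B = ennreal (\<integral>\<omega>. indicator B (restrict \<omega> I) * g (restrict \<omega> I) \<partial>P)"
      unfolding M1_def using B R1 em[OF B gm] g01 by (simp add: emeasure_distr)
    also have "\<dots> = ennreal (\<integral>\<omega>. indicator B (restrict \<omega> I) * W \<omega> \<partial>P)" using eq B by simp
    also have "\<dots> = emeasure M2 B"
      unfolding M2_def using B R1 em[OF B Wm] W01 by (simp add: emeasure_distr)
    finally show "emeasure M1 B = emeasure M2 B" .
  qed
  have "(\<integral>\<omega>. \<phi> (restrict \<omega> I) * g (restrict \<omega> I) \<partial>P) = (\<integral>y. \<phi> y \<partial>M1)"
    unfolding M1_def using R1 phi gm g01
    by (simp add: integral_distr integral_density mult.commute)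
  also have "\<dots> = (\<integral>y. \<phi> y \<partial>M2)" using \<open>M1 = M2\<close> by simp
  also have "\<dots> = (\<integral>\<omega>. \<phi> (restrict \<omega> I) * W \<omega> \<partial>P)"
    unfolding M2_def using R1 phi Wm W01
    by (simp add: integral_distr integral_density mult.commute)
  finally show ?thesis .
qed



lemma restr_meas: "(\<lambda>\<omega>. restrict \<omega> I) \<in> PiM UNIV (\<lambda>_. M) \<rightarrow>\<^sub>M PiM I (\<lambda>_. M)"
  by (rule measurable_restrict_subset) simp

lemma pyth:
  fixes g W \<gamma> :: "_ \<Rightarrow> real"
  assumes Q: "is_prior Q" and ce: "is_cond_exp Q I g W"
    and W: "W \<in> borel_measurable (PiM UNIV (\<lambda>_. borel))" and W01: "\<And>x. W x \<in> {0..1}"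
    and ga: "\<gamma> \<in> borel_measurable (PiM I (\<lambda>_. borel))" and ga01: "\<And>x. \<gamma> x \<in> {0..1}"
  shows "(\<integral>D. (\<integral>\<omega>. (\<gamma> (restrict \<omega> I) - W \<omega>)\<^sup>2 \<partial>PiM UNIV (\<lambda>_. D)) \<partial>Q)
       = (\<integral>D. (\<integral>\<omega>. (g (restrict \<omega> I) - W \<omega>)\<^sup>2 \<partial>PiM UNIV (\<lambda>_. D)) \<partial>Q)
       + (\<integral>D. (\<integral>\<omega>. (\<gamma> (restrict \<omega> I) - g (restrict \<omega> I))\<^sup>2 \<partial>PiM UNIV (\<lambda>_. D)) \<partial>Q)"
proof -
  let ?P = "PP Q :: (nat \<Rightarrow> real) measure"
  have g: "g \<in> borel_measurable (PiM I (\<lambda>_. borel))" and g01: "\<And>x. g x \<in> {0..1}"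
   and eqB: "\<And>B. B \<in> sets (PiM I (\<lambda>_. borel)) \<Longrightarrow>
        (\<integral>D. (\<integral>\<omega>. indicator B (restrict \<omega> I) * g (restrict \<omega> I) \<partial>(PiM UNIV (\<lambda>_::nat. D))) \<partial>Q)
      = (\<integral>D. (\<integral>\<omega>. indicator B (restrict \<omega> I) * W \<omega> \<partial>(PiM UNIV (\<lambda>_::nat. D))) \<partial>Q)"
    using ce unfolding is_cond_exp_def by auto
  have R: "(\<lambda>\<omega>. restrict \<omega> I) \<in> PiM UNIV (\<lambda>_. borel::real measure) \<rightarrow>\<^sub>M PiM I (\<lambda>_. borel)" by (rule restr_meas)
  have gm[measurable]: "(\<lambda>\<omega>. g (restrict \<omega> I)) \<in> borel_measurable (PiM UNIV (\<lambda>_. borel))" using g R by measurable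
  have cm[measurable]: "(\<lambda>\<omega>. \<gamma> (restrict \<omega> I)) \<in> borel_measurable (PiM UNIV (\<lambda>_. borel))" using ga R by measurable
  note Wm[measurable] = W
  have b01: "\<bar>a - b\<bar> \<le> 1" if "a \<in> {0..1}" "b \<in> {0..1}" for a b :: real using that by auto
  have sq01: "\<bar>(a - b)\<^sup>2\<bar> \<le> 1" if "a \<in> {0..1}" "b \<in> {0..1}" for a b :: real
  proof -
    have "\<bar>a - b\<bar> \<le> 1" using b01[OF that] .
    then show ?thesis using power_le_one[of "\<bar>a - b\<bar>" 2] by simp
  qed
  have eqP: "(\<integral>\<omega>. indicator B (restrict \<omega> I) * g (restrict \<omega> I) \<partial>?P) = (\<integral>\<omega>. indicator B (restrict \<omega> I) * W \<omega> \<partial>?P)"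
    if B: "B \<in> sets (PiM I (\<lambda>_. borel))" for B
  proof -
    have ind: "(\<lambda>\<omega>. indicator B (restrict \<omega> I) :: real) \<in> borel_measurable (PiM UNIV (\<lambda>_. borel))"
      using measurable_compose[OF R borel_measurable_indicator[OF B]] by (simp add: o_def)
    have m1: "(\<lambda>\<omega>. indicator B (restrict \<omega> I) * g (restrict \<omega> I)) \<in> borel_measurable (PiM UNIV (\<lambda>_. borel))"
      using ind gm by (rule borel_measurable_times)
    have m2: "(\<lambda>\<omega>. indicator B (restrict \<omega> I) * W \<omega>) \<in> borel_measurable (PiM UNIV (\<lambda>_. borel))"
      using ind W by (rule borel_measurable_times)
    have b1: "\<bar>indicator B (restrict \<omega> I) * g (restrict \<omega> I)\<bar> \<le> 1" for \<omega> using g01[of "restrict \<omega> I"] by (auto simp: indicator_def)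
    have b2: "\<bar>indicator B (restrict \<omega> I) * W \<omega>\<bar> \<le> 1" for \<omega> using W01[of \<omega>] by (auto simp: indicator_def)
    note e1 = NI_eq(1)[OF Q m1 b1] and e2 = NI_eq(1)[OF Q m2 b2]
    show ?thesis unfolding e1[symmetric] e2[symmetric] by (rule eqB[OF B])
  qed
  have orth: "(\<integral>\<omega>. (\<gamma> (restrict \<omega> I) - g (restrict \<omega> I)) * g (restrict \<omega> I) \<partial>?P)
      = (\<integral>\<omega>. (\<gamma> (restrict \<omega> I) - g (restrict \<omega> I)) * W \<omega> \<partial>?P)"
    using ortho_ext[OF PP_props(1,2)[OF Q] g g01 W W01 eqP borel_measurable_diff[OF ga g] b01[OF ga01 g01]] .
  have iP: "integrable ?P F" if "F \<in> borel_measurable (PiM UNIV (\<lambda>_. borel))" "\<And>x. \<bar>F x\<bar> \<le> c" for F :: "(nat \<Rightarrow> real) \<Rightarrow> real" and c :: real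
    using that by (rule NI_eq(2)[OF Q])
  have mf1: "(\<lambda>\<omega>. (g (restrict \<omega> I) - W \<omega>)\<^sup>2) \<in> borel_measurable (PiM UNIV (\<lambda>_. borel))" by measurable
  have mf2: "(\<lambda>\<omega>. (\<gamma> (restrict \<omega> I) - g (restrict \<omega> I))\<^sup>2) \<in> borel_measurable (PiM UNIV (\<lambda>_. borel))" by measurable
  have mf3: "(\<lambda>\<omega>. (\<gamma> (restrict \<omega> I) - W \<omega>)\<^sup>2) \<in> borel_measurable (PiM UNIV (\<lambda>_. borel))" by measurable
  have mf4: "(\<lambda>\<omega>. (\<gamma> (restrict \<omega> I) - g (restrict \<omega> I)) * g (restrict \<omega> I)) \<in> borel_measurable (PiM UNIV (\<lambda>_. borel))" by measurable
  have mf5: "(\<lambda>\<omega>. (\<gamma> (restrict \<omega> I) - g (restrict \<omega> I)) * W \<omega>) \<in> borel_measurable (PiM UNIV (\<lambda>_. borel))" by measurable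
  have bd1: "\<bar>(g (restrict \<omega> I) - W \<omega>)\<^sup>2\<bar> \<le> 1" for \<omega> by (rule sq01[OF g01 W01])
  have bd2: "\<bar>(\<gamma> (restrict \<omega> I) - g (restrict \<omega> I))\<^sup>2\<bar> \<le> 1" for \<omega> by (rule sq01[OF ga01 g01])
  have bd3: "\<bar>(\<gamma> (restrict \<omega> I) - W \<omega>)\<^sup>2\<bar> \<le> 1" for \<omega> by (rule sq01[OF ga01 W01])
  have bd4: "\<bar>(\<gamma> (restrict \<omega> I) - g (restrict \<omega> I)) * g (restrict \<omega> I)\<bar> \<le> 1" for \<omega>
    using b01[OF ga01 g01, of "restrict \<omega> I" "restrict \<omega> I"] g01[of "restrict \<omega> I"]
    unfolding abs_mult by (intro mult_le_one) auto
  have bd5: "\<bar>(\<gamma> (restrict \<omega> I) - g (restrict \<omega> I)) * W \<omega>\<bar> \<le> 1" for \<omega>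
    using b01[OF ga01 g01, of "restrict \<omega> I" "restrict \<omega> I"] W01[of \<omega>]
    unfolding abs_mult by (intro mult_le_one) auto
  note i1 = iP[OF mf1 bd1] and i2 = iP[OF mf2 bd2] and i3 = iP[OF mf4 bd4] and i4 = iP[OF mf5 bd5]
  have pw: "(\<gamma> (restrict \<omega> I) - W \<omega>)\<^sup>2 = (g (restrict \<omega> I) - W \<omega>)\<^sup>2 + (\<gamma> (restrict \<omega> I) - g (restrict \<omega> I))\<^sup>2
       + 2 * ((\<gamma> (restrict \<omega> I) - g (restrict \<omega> I)) * g (restrict \<omega> I)) - 2 * ((\<gamma> (restrict \<omega> I) - g (restrict \<omega> I)) * W \<omega>)" for \<omega>
    by (simp add: power2_eq_square algebra_simps)
  have "(\<integral>\<omega>. (\<gamma> (restrict \<omega> I) - W \<omega>)\<^sup>2 \<partial>?P) = (\<integral>\<omega>. (g (restrict \<omega> I) - W \<omega>)\<^sup>2 \<partial>?P) + (\<integral>\<omega>. (\<gamma> (restrict \<omega> I) - g (restrict \<omega> I))\<^sup>2 \<partial>?P)"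
  proof -
    have "(\<integral>\<omega>. (\<gamma> (restrict \<omega> I) - W \<omega>)\<^sup>2 \<partial>?P) = (\<integral>\<omega>. (g (restrict \<omega> I) - W \<omega>)\<^sup>2 + (\<gamma> (restrict \<omega> I) - g (restrict \<omega> I))\<^sup>2
       + 2 * ((\<gamma> (restrict \<omega> I) - g (restrict \<omega> I)) * g (restrict \<omega> I)) - 2 * ((\<gamma> (restrict \<omega> I) - g (restrict \<omega> I)) * W \<omega>) \<partial>?P)"
      by (subst pw) (rule refl)
    also have "\<dots> = (\<integral>\<omega>. (g (restrict \<omega> I) - W \<omega>)\<^sup>2 \<partial>?P) + (\<integral>\<omega>. (\<gamma> (restrict \<omega> I) - g (restrict \<omega> I))\<^sup>2 \<partial>?P)
       + 2 * (\<integral>\<omega>. (\<gamma> (restrict \<omega> I) - g (restrict \<omega> I)) * g (restrict \<omega> I) \<partial>?P) - 2 * (\<integral>\<omega>. (\<gamma> (restrict \<omega> I) - g (restrict \<omega> I)) * W \<omega> \<partial>?P)"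
      using i1 i2 i3 i4 by (simp only: integral_mult_right_zero Bochner_Integration.integral_diff Bochner_Integration.integral_add integral_mult_right
         Bochner_Integration.integrable_add integrable_mult_right Bochner_Integration.integrable_diff)
    finally show ?thesis using orth by simp
  qed
  moreover have "(\<integral>D. (\<integral>\<omega>. (\<gamma> (restrict \<omega> I) - W \<omega>)\<^sup>2 \<partial>PiM UNIV (\<lambda>_. D)) \<partial>Q) = (\<integral>\<omega>. (\<gamma> (restrict \<omega> I) - W \<omega>)\<^sup>2 \<partial>?P)"
    by (rule NI_eq(1)[OF Q mf3 bd3])
  moreover have "(\<integral>D. (\<integral>\<omega>. (g (restrict \<omega> I) - W \<omega>)\<^sup>2 \<partial>PiM UNIV (\<lambda>_. D)) \<partial>Q) = (\<integral>\<omega>. (g (restrict \<omega> I) - W \<omega>)\<^sup>2 \<partial>?P)"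
    by (rule NI_eq(1)[OF Q mf1 bd1])
  moreover have "(\<integral>D. (\<integral>\<omega>. (\<gamma> (restrict \<omega> I) - g (restrict \<omega> I))\<^sup>2 \<partial>PiM UNIV (\<lambda>_. D)) \<partial>Q) = (\<integral>\<omega>. (\<gamma> (restrict \<omega> I) - g (restrict \<omega> I))\<^sup>2 \<partial>?P)"
    by (rule NI_eq(1)[OF Q mf2 bd2])
  ultimately show ?thesis by simp
qed



lemma reindex:
  fixes \<sigma> :: "'j \<Rightarrow> 'i" and F :: "('j \<Rightarrow> real) \<Rightarrow> real"
  assumes Q: "is_prior Q" and inj: "inj \<sigma>" and F: "F \<in> borel_measurable (PiM UNIV (\<lambda>_. borel))"
  shows "(\<integral>D. (\<integral>\<omega>. F (\<lambda>j. \<omega> (\<sigma> j)) \<partial>PiM UNIV (\<lambda>_::'i. D)) \<partial>Q) = (\<integral>D. (\<integral>\<omega>. F \<omega> \<partial>PiM UNIV (\<lambda>_::'j. D)) \<partial>Q)"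
proof (rule Bochner_Integration.integral_cong[OF refl])
  fix D assume "D \<in> space Q"
  then have D: "D \<in> space (prob_algebra (borel::real measure))" using Q unfolding is_prior_def
    using sets_eq_imp_space_eq by blast
  note DD = space_Q_D[OF D]
  have dist: "distr (PiM UNIV (\<lambda>_::'i. D)) (PiM UNIV (\<lambda>_::'j. D)) (\<lambda>\<omega>. \<lambda>n\<in>UNIV. \<omega> (\<sigma> n)) = PiM UNIV (\<lambda>_::'j. D)"
    using distr_PiM_reindex[of UNIV "\<lambda>_. D" \<sigma> UNIV] DD inj by simp
  have T: "(\<lambda>\<omega>. \<lambda>n\<in>UNIV. \<omega> (\<sigma> n)) \<in> PiM UNIV (\<lambda>_::'i. D) \<rightarrow>\<^sub>M PiM UNIV (\<lambda>_::'j. D)"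
    by (intro measurable_restrict measurable_component_singleton) auto
  have F': "F \<in> borel_measurable (PiM UNIV (\<lambda>_::'j. D))"
    using F DD by (subst measurable_cong_sets[OF sets_PiM_cong refl]) auto
  have "(\<integral>\<omega>. F \<omega> \<partial>PiM UNIV (\<lambda>_::'j. D)) = (\<integral>\<omega>. F \<omega> \<partial>distr (PiM UNIV (\<lambda>_::'i. D)) (PiM UNIV (\<lambda>_::'j. D)) (\<lambda>\<omega>. \<lambda>n\<in>UNIV. \<omega> (\<sigma> n)))"
    using dist by simp
  also have "\<dots> = (\<integral>\<omega>. F (\<lambda>n\<in>UNIV. \<omega> (\<sigma> n)) \<partial>PiM UNIV (\<lambda>_::'i. D))"
    by (rule integral_distr[OF T F'])
  moreover have "(\<lambda>n\<in>UNIV. \<omega> (\<sigma> n)) = (\<lambda>n. \<omega> (\<sigma> n))" for \<omega> :: "'i \<Rightarrow> real" by (rule ext) simp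
  ultimately show "(\<integral>\<omega>. F (\<lambda>j. \<omega> (\<sigma> j)) \<partial>PiM UNIV (\<lambda>_::'i. D)) = (\<integral>\<omega>. F \<omega> \<partial>PiM UNIV (\<lambda>_::'j. D))"
    by simp
qed

lemma CE_reindex:
  fixes \<tau> :: "nat \<Rightarrow> nat" and W :: "(nat \<Rightarrow> real) \<Rightarrow> real"
  assumes Q: "is_prior Q" and ce: "is_cond_exp Q I g W" and inj: "inj \<tau>"
    and W: "W \<in> borel_measurable (PiM UNIV (\<lambda>_. borel))"
  shows "is_cond_exp Q (\<tau> ` I) (\<lambda>y. g (\<lambda>t\<in>I. y (\<tau> t))) (\<lambda>\<omega>. W (\<lambda>t. \<omega> (\<tau> t)))"
proof -
  have g: "g \<in> borel_measurable (PiM I (\<lambda>_. borel))" and g01: "\<And>x. g x \<in> {0..1}"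
   and eqB: "\<And>B. B \<in> sets (PiM I (\<lambda>_. borel)) \<Longrightarrow>
        (\<integral>D. (\<integral>\<omega>. indicator B (restrict \<omega> I) * g (restrict \<omega> I) \<partial>(PiM UNIV (\<lambda>_::nat. D))) \<partial>Q)
      = (\<integral>D. (\<integral>\<omega>. indicator B (restrict \<omega> I) * W \<omega> \<partial>(PiM UNIV (\<lambda>_::nat. D))) \<partial>Q)"
    using ce unfolding is_cond_exp_def by auto
  have S: "(\<lambda>y. \<lambda>t\<in>I. y (\<tau> t)) \<in> PiM (\<tau> ` I) (\<lambda>_. borel::real measure) \<rightarrow>\<^sub>M PiM I (\<lambda>_. borel)"
    by (intro measurable_restrict measurable_component_singleton) auto
  have T: "(\<lambda>y. \<lambda>c\<in>\<tau> ` I. y (the_inv_into I \<tau> c)) \<in> PiM I (\<lambda>_. borel::real measure) \<rightarrow>\<^sub>M PiM (\<tau> ` I) (\<lambda>_. borel)"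
  proof (intro measurable_restrict measurable_component_singleton)
    fix c assume "c \<in> \<tau> ` I"
    then show "the_inv_into I \<tau> c \<in> I" using inj by (auto simp: the_inv_into_f_f inj_on_subset)
  qed
  have R: "(\<lambda>\<omega>. restrict \<omega> I) \<in> PiM UNIV (\<lambda>_. borel::real measure) \<rightarrow>\<^sub>M PiM I (\<lambda>_. borel)" by (rule restr_meas)
  have inv: "the_inv_into I \<tau> (\<tau> t) = t" if "t \<in> I" for t
    using that inj by (intro the_inv_into_f_f) (auto intro: inj_on_subset)
  show ?thesis unfolding is_cond_exp_def
  proof (intro conjI ballI allI)
    show "(\<lambda>y. g (\<lambda>t\<in>I. y (\<tau> t))) \<in> borel_measurable (PiM (\<tau> ` I) (\<lambda>_. borel))"
      using measurable_compose[OF S g] by (simp add: o_def)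
    show "g (\<lambda>t\<in>I. y (\<tau> t)) \<in> {0..1}" for y using g01 .
  next
    fix B assume B: "B \<in> sets (PiM (\<tau> ` I) (\<lambda>_. borel::real measure))"
    define B' where "B' = (\<lambda>y. \<lambda>c\<in>\<tau> ` I. y (the_inv_into I \<tau> c)) -` B \<inter> space (PiM I (\<lambda>_. borel::real measure))"
    have B': "B' \<in> sets (PiM I (\<lambda>_. borel))" unfolding B'_def using T B by (rule measurable_sets)
    have key1: "restrict \<omega> (\<tau> ` I) = (\<lambda>c\<in>\<tau> ` I. restrict (\<lambda>t. \<omega> (\<tau> t)) I (the_inv_into I \<tau> c))" for \<omega> :: "nat \<Rightarrow> real"
      by (rule ext) (auto simp: inv)
    have key2: "indicator B (restrict \<omega> (\<tau> ` I)) = (indicator B' (restrict (\<lambda>t. \<omega> (\<tau> t)) I) :: real)" for \<omega> :: "nat \<Rightarrow> real"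
      unfolding B'_def by (subst key1) (simp add: indicator_def space_PiM)
    have key3: "(\<lambda>t\<in>I. restrict \<omega> (\<tau> ` I) (\<tau> t)) = restrict (\<lambda>t. \<omega> (\<tau> t)) I" for \<omega> :: "nat \<Rightarrow> real"
      by (rule ext) auto
    have ind: "(\<lambda>x. indicator B' (restrict x I) :: real) \<in> borel_measurable (PiM UNIV (\<lambda>_. borel))"
      using measurable_compose[OF R borel_measurable_indicator[OF B']] by (simp add: o_def)
    have gm: "(\<lambda>x. g (restrict x I)) \<in> borel_measurable (PiM UNIV (\<lambda>_. borel))"
      using measurable_compose[OF R g] by (simp add: o_def)
    have "(\<integral>D. (\<integral>\<omega>. indicator B (restrict \<omega> (\<tau> ` I)) * g (\<lambda>t\<in>I. restrict \<omega> (\<tau> ` I) (\<tau> t)) \<partial>PiM UNIV (\<lambda>_::nat. D)) \<partial>Q)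
        = (\<integral>D. (\<integral>\<omega>. (\<lambda>x. indicator B' (restrict x I) * g (restrict x I)) (\<lambda>t. \<omega> (\<tau> t)) \<partial>PiM UNIV (\<lambda>_::nat. D)) \<partial>Q)"
      by (simp only: key2 key3)
    also have "\<dots> = (\<integral>D. (\<integral>\<omega>. indicator B' (restrict \<omega> I) * g (restrict \<omega> I) \<partial>PiM UNIV (\<lambda>_::nat. D)) \<partial>Q)"
      by (rule reindex[OF Q inj borel_measurable_times[OF ind gm]])
    also have "\<dots> = (\<integral>D. (\<integral>\<omega>. indicator B' (restrict \<omega> I) * W \<omega> \<partial>PiM UNIV (\<lambda>_::nat. D)) \<partial>Q)"
      by (rule eqB[OF B'])
    also have "\<dots> = (\<integral>D. (\<integral>\<omega>. (\<lambda>x. indicator B' (restrict x I) * W x) (\<lambda>t. \<omega> (\<tau> t)) \<partial>PiM UNIV (\<lambda>_::nat. D)) \<partial>Q)"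
      by (rule reindex[OF Q inj borel_measurable_times[OF ind W], symmetric])
    also have "\<dots> = (\<integral>D. (\<integral>\<omega>. indicator B (restrict \<omega> (\<tau> ` I)) * W (\<lambda>t. \<omega> (\<tau> t)) \<partial>PiM UNIV (\<lambda>_::nat. D)) \<partial>Q)"
      by (simp only: key2)
    finally show "(\<integral>D. (\<integral>\<omega>. indicator B (restrict \<omega> (\<tau> ` I)) * g (\<lambda>t\<in>I. restrict \<omega> (\<tau> ` I) (\<tau> t)) \<partial>PiM UNIV (\<lambda>_::nat. D)) \<partial>Q)
        = (\<integral>D. (\<integral>\<omega>. indicator B (restrict \<omega> (\<tau> ` I)) * W (\<lambda>t. \<omega> (\<tau> t)) \<partial>PiM UNIV (\<lambda>_::nat. D)) \<partial>Q)" .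
  qed
qed



lemma ecdf_alt:
  "ecdf (map \<omega> zs) t = (\<Sum>s<length zs. if \<omega> (zs ! s) \<le> t then 1 else 0) / real (length zs)"
proof -
  have "length (filter (\<lambda>s. s \<le> t) (map \<omega> zs)) = card {i. i < length zs \<and> \<omega> (zs ! i) \<le> t}"
    by (simp add: length_filter_conv_card) (rule arg_cong[where f=card], auto)
  also have "{i. i < length zs \<and> \<omega> (zs ! i) \<le> t} = {i\<in>{..<length zs}. \<omega> (zs ! i) \<le> t}" by auto
  finally have "real (length (filter (\<lambda>s. s \<le> t) (map \<omega> zs))) = (\<Sum>s\<in>{i\<in>{..<length zs}. \<omega> (zs ! i) \<le> t}. 1)"
    by simp
  also have "\<dots> = (\<Sum>s<length zs. if \<omega> (zs ! s) \<le> t then 1 else 0)"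
    by (rule sum.inter_filter) simp
  finally show ?thesis unfolding ecdf_def by simp
qed

lemma ecdf_01: "ecdf S t \<in> {0..1}"
proof -
  have "length (filter (\<lambda>s. s \<le> t) S) \<le> length S" by (rule length_filter_le)
  then show ?thesis unfolding ecdf_def
    by (cases "length S = 0") (auto simp: divide_le_eq_1)
qed

lemma ecdf_meas:
  "(\<lambda>\<omega>. ecdf (map \<omega> zs) (\<omega> t0)) \<in> borel_measurable (PiM UNIV (\<lambda>_. borel))"
  unfolding ecdf_alt by measurable

definition swp :: "nat \<Rightarrow> nat \<Rightarrow> nat \<Rightarrow> nat" where
  "swp a b x = (if x = a then b else if x = b then a else x)"

lemma inj_swp: "inj (swp a b)"
  unfolding swp_def inj_def by auto

lemma CE_exch:
  fixes zs :: "nat list"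
  assumes Q: "is_prior Q" and ce: "is_cond_exp Q I g (\<lambda>\<omega>. ecdf (map \<omega> zs) (\<omega> t0))"
    and zs: "zs \<noteq> []" "set zs \<inter> I = {}" "t0 \<notin> set zs"
  shows "is_cond_exp Q I g (\<lambda>\<omega>. indicator {x. x \<le> \<omega> t0} (\<omega> (hd zs)))"
proof -
  let ?P = "PP Q :: (nat \<Rightarrow> real) measure"
  let ?n = "length zs"
  have g: "g \<in> borel_measurable (PiM I (\<lambda>_. borel))" and g01: "\<And>x. g x \<in> {0..1}"
   and eqB: "\<And>B. B \<in> sets (PiM I (\<lambda>_. borel)) \<Longrightarrow>
        (\<integral>D. (\<integral>\<omega>. indicator B (restrict \<omega> I) * g (restrict \<omega> I) \<partial>(PiM UNIV (\<lambda>_::nat. D))) \<partial>Q)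
      = (\<integral>D. (\<integral>\<omega>. indicator B (restrict \<omega> I) * ecdf (map \<omega> zs) (\<omega> t0) \<partial>(PiM UNIV (\<lambda>_::nat. D))) \<partial>Q)"
    using ce unfolding is_cond_exp_def by auto
  have R: "(\<lambda>\<omega>. restrict \<omega> I) \<in> PiM UNIV (\<lambda>_. borel::real measure) \<rightarrow>\<^sub>M PiM I (\<lambda>_. borel)" by (rule restr_meas)
  have n0: "?n > 0" using zs by simp
  show ?thesis unfolding is_cond_exp_def
  proof (intro conjI ballI allI g g01)
    fix B assume B: "B \<in> sets (PiM I (\<lambda>_. borel::real measure))"
    have ind: "(\<lambda>x. indicator B (restrict x I) :: real) \<in> borel_measurable (PiM UNIV (\<lambda>_. borel))"
      using measurable_compose[OF R borel_measurable_indicator[OF B]] by (simp add: o_def)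
    define F where "F s \<omega> = indicator B (restrict \<omega> I) * (if \<omega> (zs ! s) \<le> \<omega> t0 then 1 else 0 :: real)" for s \<omega>
    have Fm: "F s \<in> borel_measurable (PiM UNIV (\<lambda>_. borel))" for s
    proof -
      have "(\<lambda>\<omega>::nat \<Rightarrow> real. if \<omega> (zs ! s) \<le> \<omega> t0 then 1 else 0 :: real) \<in> borel_measurable (PiM UNIV (\<lambda>_. borel))"
        by measurable
      then show ?thesis unfolding F_def by (intro borel_measurable_times ind)
    qed
    have F0: "hd zs = zs ! 0" using zs by (simp add: hd_conv_nth)
    have eqF: "(\<lambda>\<omega>. indicator B (restrict \<omega> I) * indicator {x. x \<le> \<omega> t0} (\<omega> (hd zs)) :: real) = F 0"
      by (auto simp: F_def F0 indicator_def fun_eq_iff)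
    have Fb: "\<bar>F s \<omega>\<bar> \<le> 1" for s \<omega> unfolding F_def by (auto simp: indicator_def)
    have Fs: "(\<integral>\<omega>. F s \<omega> \<partial>?P) = (\<integral>\<omega>. F 0 \<omega> \<partial>?P)" if s: "s < ?n" for s
    proof -
      let ?\<tau> = "swp (zs ! s) (zs ! 0)"
      have in1: "zs ! s \<in> set zs" "zs ! 0 \<in> set zs" using s n0 by auto
      have r: "restrict (\<lambda>j. \<omega> (?\<tau> j)) I = restrict \<omega> I" for \<omega> :: "nat \<Rightarrow> real"
        using zs(2) in1 by (intro ext) (auto simp: swp_def)
      have t: "?\<tau> t0 = t0" using zs(3) in1 unfolding swp_def by auto
      have z: "?\<tau> (zs ! 0) = zs ! s" unfolding swp_def by auto
      have pw: "F 0 (\<lambda>j. \<omega> (?\<tau> j)) = F s \<omega>" for \<omega> :: "nat \<Rightarrow> real"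
        unfolding F_def r using t z by simp
      have "(\<integral>\<omega>. F s \<omega> \<partial>?P) = (\<integral>D. (\<integral>\<omega>. F s \<omega> \<partial>PiM UNIV (\<lambda>_::nat. D)) \<partial>Q)"
        by (rule NI_eq(1)[OF Q Fm Fb, symmetric])
      also have "\<dots> = (\<integral>D. (\<integral>\<omega>. F 0 (\<lambda>j. \<omega> (?\<tau> j)) \<partial>PiM UNIV (\<lambda>_::nat. D)) \<partial>Q)"
        by (simp only: pw)
      also have "\<dots> = (\<integral>D. (\<integral>\<omega>. F 0 \<omega> \<partial>PiM UNIV (\<lambda>_::nat. D)) \<partial>Q)"
        by (rule reindex[OF Q inj_swp Fm])
      also have "\<dots> = (\<integral>\<omega>. F 0 \<omega> \<partial>?P)"
        by (rule NI_eq(1)[OF Q Fm Fb])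
      finally show ?thesis .
    qed
    have pw2: "indicator B (restrict \<omega> I) * ecdf (map \<omega> zs) (\<omega> t0) = (\<Sum>s<?n. F s \<omega>) / real ?n" for \<omega>
      unfolding ecdf_alt F_def by (simp add: sum_distrib_left)
    have m2: "(\<lambda>\<omega>. indicator B (restrict \<omega> I) * ecdf (map \<omega> zs) (\<omega> t0)) \<in> borel_measurable (PiM UNIV (\<lambda>_. borel))"
      by (intro borel_measurable_times ind ecdf_meas)
    have b2: "\<bar>indicator B (restrict \<omega> I) * ecdf (map \<omega> zs) (\<omega> t0)\<bar> \<le> 1" for \<omega>
      using ecdf_01[of "map \<omega> zs" "\<omega> t0"] by (auto simp: indicator_def)
    have m3: "(\<lambda>\<omega>. indicator B (restrict \<omega> I) * indicator {x. x \<le> \<omega> t0} (\<omega> (hd zs)) :: real) \<in> borel_measurable (PiM UNIV (\<lambda>_. borel))"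
      using Fm[of 0] eqF by simp
    have "(\<integral>D. (\<integral>\<omega>. indicator B (restrict \<omega> I) * ecdf (map \<omega> zs) (\<omega> t0) \<partial>(PiM UNIV (\<lambda>_::nat. D))) \<partial>Q)
        = (\<integral>\<omega>. indicator B (restrict \<omega> I) * ecdf (map \<omega> zs) (\<omega> t0) \<partial>?P)"
      by (rule NI_eq(1)[OF Q m2 b2])
    also have "\<dots> = (\<integral>\<omega>. (\<Sum>s<?n. F s \<omega>) / real ?n \<partial>?P)" by (simp only: pw2)
    also have "\<dots> = (\<Sum>s<?n. (\<integral>\<omega>. F s \<omega> \<partial>?P)) / real ?n"
      using NI_eq(2)[OF Q Fm Fb] by simp
    also have "\<dots> = (\<Sum>s<?n. (\<integral>\<omega>. F 0 \<omega> \<partial>?P)) / real ?n"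
      using Fs by simp
    also have "\<dots> = (\<integral>\<omega>. F 0 \<omega> \<partial>?P)" using n0 by simp
    also have "\<dots> = (\<integral>D. (\<integral>\<omega>. F 0 \<omega> \<partial>(PiM UNIV (\<lambda>_::nat. D))) \<partial>Q)"
      by (rule NI_eq(1)[OF Q Fm Fb, symmetric])
    also have "\<dots> = (\<integral>D. (\<integral>\<omega>. indicator B (restrict \<omega> I) * indicator {x. x \<le> \<omega> t0} (\<omega> (hd zs)) \<partial>(PiM UNIV (\<lambda>_::nat. D))) \<partial>Q)"
      by (simp only: eqF)
    finally show "(\<integral>D. (\<integral>\<omega>. indicator B (restrict \<omega> I) * g (restrict \<omega> I) \<partial>(PiM UNIV (\<lambda>_::nat. D))) \<partial>Q)
      = (\<integral>D. (\<integral>\<omega>. indicator B (restrict \<omega> I) * indicator {x. x \<le> \<omega> t0} (\<omega> (hd zs)) \<partial>(PiM UNIV (\<lambda>_::nat. D))) \<partial>Q)"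
      using eqB[OF B] by simp
  qed
qed



definition LG :: "nat \<Rightarrow> (nat \<Rightarrow> real) set \<Rightarrow> real list set" where
  "LG l A = {xs. length xs = l \<and> restrict (\<lambda>j. xs ! j) {..<l} \<in> A}"

lemma sets_list_borel:
  "sets list_borel = sigma_sets UNIV (\<Union>l. (\<lambda>A. {xs. length xs = l \<and> restrict (\<lambda>j. xs ! j) {..<l} \<in> A})
              ` sets (PiM {..<l} (\<lambda>_. (borel :: real measure))))"
  unfolding list_borel_def by (rule sets_measure_of) simp

lemma space_list_borel: "space list_borel = UNIV"
  unfolding list_borel_def by (simp add: space_measure_of_conv)

lemma LG_sets: "A \<in> sets (PiM {..<l} (\<lambda>_. borel)) \<Longrightarrow> LG l A \<in> sets list_borel"
  unfolding sets_list_borel LG_def by (rule sigma_sets.Basic) blast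

lemma len_sets: "{xs. length xs = l} \<in> sets list_borel"
proof -
  have "{xs. length xs = l} = LG l (space (PiM {..<l} (\<lambda>_. borel :: real measure)))"
    unfolding LG_def by (auto simp: space_PiM)
  then show ?thesis using LG_sets[OF sets.top] by simp
qed

lemma map_meas:
  fixes cs :: "nat list"
  assumes "set cs \<subseteq> J"
  shows "(\<lambda>y. map y cs) \<in> PiM J (\<lambda>_. borel::real measure) \<rightarrow>\<^sub>M list_borel"
  unfolding list_borel_def
proof (rule measurable_measure_of)
  fix Y assume "Y \<in> (\<Union>l. (\<lambda>A. {xs. length xs = l \<and> restrict (\<lambda>j. xs ! j) {..<l} \<in> A})
              ` sets (PiM {..<l} (\<lambda>_. (borel :: real measure))))"
  then obtain l A where A: "A \<in> sets (PiM {..<l} (\<lambda>_. (borel :: real measure)))"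
    and Y: "Y = {xs. length xs = l \<and> restrict (\<lambda>j. xs ! j) {..<l} \<in> A}" by blast
  show "(\<lambda>y. map y cs) -` Y \<inter> space (PiM J (\<lambda>_. borel)) \<in> sets (PiM J (\<lambda>_. borel))"
  proof (cases "l = length cs")
    case True
    have S: "(\<lambda>y. \<lambda>j\<in>{..<l}. y (cs ! j)) \<in> PiM J (\<lambda>_. borel::real measure) \<rightarrow>\<^sub>M PiM {..<l} (\<lambda>_. borel)"
      using assms True by (intro measurable_restrict measurable_component_singleton) auto
    have "(\<lambda>y. map y cs) -` Y \<inter> space (PiM J (\<lambda>_. borel)) = (\<lambda>y. \<lambda>j\<in>{..<l}. y (cs ! j)) -` A \<inter> space (PiM J (\<lambda>_. borel))"
    proof -
      have "restrict (\<lambda>j. map y cs ! j) {..<l} = (\<lambda>j\<in>{..<l}. y (cs ! j))" for y :: "nat \<Rightarrow> real"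
        using True by (intro ext) auto
      then show ?thesis unfolding Y using True by auto
    qed
    then show ?thesis using measurable_sets[OF S A] by simp
  next
    case False
    then have "(\<lambda>y. map y cs) -` Y \<inter> space (PiM J (\<lambda>_. borel)) = {}" unfolding Y by auto
    then show ?thesis by simp
  qed
qed auto

lemma nth_beyond: "length xs \<le> j \<Longrightarrow> xs ! j = [] ! (j - length xs)"
proof (induction xs arbitrary: j)
  case Nil then show ?case by simp
next
  case (Cons a xs)
  then obtain j' where "j = Suc j'" by (cases j) auto
  with Cons show ?case by simp
qed

lemma nth_meas: "(\<lambda>xs. xs ! j) \<in> list_borel \<rightarrow>\<^sub>M (borel :: real measure)"
proof (rule measurableI)
  fix xs show "xs ! j \<in> space borel" by simp
next
  fix A :: "real set" assume A: "A \<in> sets borel"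
  define AA where "AA l = (if j < l then (\<lambda>x. x j) -` A \<inter> space (PiM {..<l} (\<lambda>_. borel :: real measure))
      else if [] ! (j - l) \<in> A then space (PiM {..<l} (\<lambda>_. borel :: real measure)) else {})" for l
  have AA: "AA l \<in> sets (PiM {..<l} (\<lambda>_. borel))" for l
    unfolding AA_def using A by (auto intro!: measurable_sets[OF measurable_component_singleton])
  have "(\<lambda>xs. xs ! j) -` A \<inter> space list_borel = (\<Union>l. LG l (AA l))"
  proof (intro set_eqI iffI)
    fix xs assume "xs \<in> (\<lambda>xs. xs ! j) -` A \<inter> space list_borel"
    then have "xs ! j \<in> A" by simp
    then have "xs \<in> LG (length xs) (AA (length xs))"
      unfolding LG_def AA_def using nth_beyond[of xs j] by (cases "j < length xs") (auto simp: space_PiM)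
    then show "xs \<in> (\<Union>l. LG l (AA l))" by blast
  next
    fix xs assume "xs \<in> (\<Union>l. LG l (AA l))"
    then obtain l where "xs \<in> LG l (AA l)" by blast
    then show "xs \<in> (\<lambda>xs. xs ! j) -` A \<inter> space list_borel"
      unfolding LG_def AA_def space_list_borel using nth_beyond[of xs j]
      by (auto split: if_splits)
  qed
  also have "\<dots> \<in> sets list_borel" using LG_sets[OF AA] by blast
  finally show "(\<lambda>xs. xs ! j) -` A \<inter> space list_borel \<in> sets list_borel" .
qed

lemma h01:
  assumes "valid_h Q h" "r \<ge> 1" "length l = Suc k"
  shows "h k r l \<in> {0..1}"
proof -
  have "\<forall>x. h k r (map x [0..<Suc k]) \<in> {0..1}" using assms(1,2) unfolding valid_h_def is_cond_exp_def by blast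
  then have "h k r (map (\<lambda>j. l ! j) [0..<Suc k]) \<in> {0..1}" by blast
  moreover have "map (\<lambda>j. l ! j) [0..<Suc k] = l" using assms(3) by (metis map_nth)
  ultimately show ?thesis by simp
qed

lemma h_meas:
  assumes "valid_h Q h" "r \<ge> 1"
  shows "(\<lambda>x. h k r (map x [0..<Suc k])) \<in> borel_measurable (PiM {..k} (\<lambda>_. borel))"
  using assms unfolding valid_h_def is_cond_exp_def by blast

lemma gamma_meas:
  assumes vh: "valid_h Q h" and r: "r \<ge> 1" and fi: "fi \<in> list_borel \<rightarrow>\<^sub>M list_borel"
  shows "(\<lambda>y. h (length (fi (map y [0..<k]))) r (fi (map y [0..<k]) @ [y k])) \<in> borel_measurable (PiM {..k} (\<lambda>_. borel))"
proof -
  let ?M = "PiM {..k} (\<lambda>_. borel :: real measure)"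
  let ?\<psi> = "\<lambda>y. fi (map y [0..<k])"
  have psi: "?\<psi> \<in> ?M \<rightarrow>\<^sub>M list_borel"
  proof -
    have "set [0..<k] \<subseteq> {..k}" by auto
    from measurable_compose[OF map_meas[OF this] fi] show ?thesis by (simp add: o_def)
  qed
  define A where "A l = ?\<psi> -` {xs. length xs = l} \<inter> space ?M" for l
  show ?thesis
  proof (rule measurable_piecewise_restrict2[where A=A])
    show "A l \<in> sets ?M" for l unfolding A_def by (rule measurable_sets[OF psi len_sets])
    show "space ?M = (\<Union>l. A l)" unfolding A_def by auto
    fix l
    define z where "z y = (\<lambda>j\<in>{..l}. if j < l then ?\<psi> y ! j else y k)" for y
    have zm: "z \<in> ?M \<rightarrow>\<^sub>M PiM {..l} (\<lambda>_. borel)"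
      unfolding z_def
    proof (intro measurable_restrict)
      fix j assume "j \<in> {..l}"
      show "(\<lambda>y. if j < l then ?\<psi> y ! j else y k) \<in> borel_measurable ?M"
      proof (cases "j < l")
        case True
        then show ?thesis using measurable_compose[OF psi nth_meas[of j]] by (simp add: o_def)
      next
        case False
        then show ?thesis by simp
      qed
    qed
    have "(\<lambda>y. h l r (map (z y) [0..<Suc l])) \<in> borel_measurable ?M"
      using measurable_compose[OF zm h_meas[OF vh r, of l]] by (simp add: o_def)
    moreover have "\<forall>y\<in>A l. h (length (?\<psi> y)) r (?\<psi> y @ [y k]) = h l r (map (z y) [0..<Suc l])"
    proof
      fix y assume "y \<in> A l"
      then have len: "length (?\<psi> y) = l" unfolding A_def by simp
      have "map (z y) [0..<Suc l] = ?\<psi> y @ [y k]"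
        using len by (intro nth_equalityI) (auto simp: z_def nth_append)
      then show "h (length (?\<psi> y)) r (?\<psi> y @ [y k]) = h l r (map (z y) [0..<Suc l])" using len by simp
    qed
    ultimately show "\<exists>h'\<in>borel_measurable ?M. \<forall>y\<in>A l. h (length (?\<psi> y)) r (?\<psi> y @ [y k]) = h' y"
      by (intro bexI[where x="\<lambda>y. h l r (map (z y) [0..<Suc l])"]) auto
  qed
qed



definition idx :: "nat \<Rightarrow> (nat \<Rightarrow> nat) \<Rightarrow> nat \<Rightarrow> (nat \<times> nat) list" where
  "idx m n i = concat (map (\<lambda>j. map (\<lambda>t. (j, t)) [0..<n j]) (filter (\<lambda>j. j \<noteq> i) [0..<m]))"

lemma others_id:
  "others m n ((\<lambda>_. id)(i := g)) i \<omega> = map \<omega> (idx m n i)"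
  unfolding others_def idx_def sample_def map_concat
  by (rule arg_cong[where f=concat]) (auto intro!: map_cong)

lemma distinct_concat_pairs:
  "distinct js \<Longrightarrow> distinct (concat (map (\<lambda>j. map (\<lambda>t. (j, t)) [0..<n j]) js))"
  by (induction js) (auto simp: distinct_map inj_on_def)

lemma distinct_idx: "distinct (idx m n i)"
  unfolding idx_def by (rule distinct_concat_pairs) simp

lemma set_idx: "x \<in> set (idx m n i) \<Longrightarrow> fst x < m \<and> fst x \<noteq> i"
  unfolding idx_def by auto

lemma len_idx: "length (idx m n i) = (\<Sum>j\<in>{..<m} - {i}. n j)"
proof -
  have "length (idx m n i) = sum_list (map n (filter (\<lambda>j. j \<noteq> i) [0..<m]))"
    unfolding idx_def by (simp add: length_concat o_def)
  also have "\<dots> = sum n (set (filter (\<lambda>j. j \<noteq> i) [0..<m]))"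
    by (rule sum_list_distinct_conv_sum_set) simp
  also have "set (filter (\<lambda>j. j \<noteq> i) [0..<m]) = {..<m} - {i}" by auto
  finally show ?thesis .
qed

lemma inj_list_ext:
  assumes "distinct lst" "inj e" "\<And>t. e t \<notin> set lst"
  shows "inj (\<lambda>t. if t < length lst then lst ! t else e t)"
proof (rule injI)
  fix x y assume eq: "(if x < length lst then lst ! x else e x) = (if y < length lst then lst ! y else e y)"
  show "x = y"
  proof (cases "x < length lst"; cases "y < length lst")
    assume "x < length lst" "y < length lst"
    then show ?thesis using eq assms(1) by (simp add: nth_eq_iff_index_eq)
  next
    assume "x < length lst" "\<not> y < length lst"
    then show ?thesis using eq assms(3)[of y] by (metis nth_mem)
  next
    assume "\<not> x < length lst" "y < length lst"
    then show ?thesis using eq assms(3)[of x] by (metis nth_mem)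
  next
    assume "\<not> x < length lst" "\<not> y < length lst"
    then show ?thesis using eq assms(2) by (simp add: inj_eq)
  qed
qed

lemma restr_map: "t \<le> k \<Longrightarrow> map (restrict x {..k}) [0..<t] = map x [0..<t]"
  by auto

lemma exp_loss_reduce:
  fixes g :: "real list \<Rightarrow> real list"
  assumes Q: "is_prior Q" and vh: "valid_h Q h" and i: "i < m"
    and N2: "(\<Sum>j\<in>{..<m} - {i}. n j) \<ge> 2" and g: "g \<in> list_borel \<rightarrow>\<^sub>M list_borel"
  defines "k \<equiv> n i" and "r \<equiv> (\<Sum>j\<in>{..<m} - {i}. n j) - 1"
  shows "exp_loss Q h m n ((\<lambda>_. id)(i := g)) i =
    (\<integral>D. (\<integral>x. (h (length (g (map (restrict x {..k}) [0..<k]))) r (g (map (restrict x {..k}) [0..<k]) @ [restrict x {..k} k])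
          - ecdf (map x [Suc k..<Suc k + r]) (x k))\<^sup>2 \<partial>PiM UNIV (\<lambda>_::nat. D)) \<partial>Q)"
proof -
  let ?N = "length (idx m n i)"
  have N: "?N = r + 1" "?N \<ge> 2" using N2 unfolding r_def len_idx by auto
  have r1: "r \<ge> 1" using N2 unfolding r_def by simp
  define \<gamma> where "\<gamma> y = h (length (g (map y [0..<k]))) r (g (map y [0..<k]) @ [y k])" for y
  define W where "W x = ecdf (map x [Suc k..<Suc k + r]) (x k)" for x :: "nat \<Rightarrow> real"
  define \<Psi> where "\<Psi> x = (\<gamma> (restrict x {..k}) - W x)\<^sup>2" for x
  have \<gamma>m: "\<gamma> \<in> borel_measurable (PiM {..k} (\<lambda>_. borel))"
    unfolding \<gamma>_def by (rule gamma_meas[OF vh r1 g])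
  have \<gamma>01: "\<gamma> y \<in> {0..1}" for y unfolding \<gamma>_def by (rule h01[OF vh r1]) simp
  have \<Psi>m: "\<Psi> \<in> borel_measurable (PiM UNIV (\<lambda>_. borel))"
  proof -
    have "(\<lambda>x. \<gamma> (restrict x {..k})) \<in> borel_measurable (PiM UNIV (\<lambda>_. borel))"
      using measurable_compose[OF restr_meas \<gamma>m] by (simp add: o_def)
    moreover have "W \<in> borel_measurable (PiM UNIV (\<lambda>_. borel))" unfolding W_def by (rule ecdf_meas)
    ultimately show ?thesis unfolding \<Psi>_def by measurable
  qed
  have \<Psi>b: "\<bar>\<Psi> x\<bar> \<le> 1" for x
  proof -
    have "\<bar>\<gamma> (restrict x {..k}) - W x\<bar> \<le> 1" using \<gamma>01[of "restrict x {..k}"] ecdf_01[of "map x [Suc k..<Suc k + r]" "x k"]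
      unfolding W_def by auto
    then show ?thesis unfolding \<Psi>_def using power_le_one[of "\<bar>\<gamma> (restrict x {..k}) - W x\<bar>" 2] by simp
  qed
  define rest where "rest p = take p (idx m n i) @ drop (Suc p) (idx m n i)" for p
  define lst where "lst p = map (\<lambda>t. (i, t)) [0..<k] @ idx m n i ! p # rest p" for p
  define \<sigma> where "\<sigma> p t = (if t < length (lst p) then lst p ! t else (m + t, 0))" for p t
  define T where "T p \<omega> = (h (length (g (sample \<omega> i k))) (?N - 1) (g (sample \<omega> i k) @ [map \<omega> (idx m n i) ! p])
                       - ecdf (take p (map \<omega> (idx m n i)) @ drop (Suc p) (map \<omega> (idx m n i))) (map \<omega> (idx m n i) ! p))\<^sup>2" for p \<omega>
  have lenrest: "length (rest p) = r" if "p < ?N" for p using that N unfolding rest_def by auto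
  have \<sigma>1: "\<sigma> p t = (i, t)" if "t < k" for p t using that unfolding \<sigma>_def lst_def by (auto simp: nth_append)
  have \<sigma>2: "\<sigma> p k = idx m n i ! p" for p unfolding \<sigma>_def lst_def by (auto simp: nth_append)
  have \<sigma>3: "\<sigma> p (Suc k + s) = rest p ! s" if "p < ?N" "s < r" for p s
    using that lenrest[OF that(1)] unfolding \<sigma>_def lst_def by (auto simp: nth_append)
  have inj\<sigma>: "inj (\<sigma> p)" if p: "p < ?N" for p
    unfolding \<sigma>_def
  proof (rule inj_list_ext)
    have d: "distinct (idx m n i)" by (rule distinct_idx)
    have "distinct (idx m n i ! p # rest p)"
    proof -
      have "idx m n i = take p (idx m n i) @ idx m n i ! p # drop (Suc p) (idx m n i)"
        using p by (simp add: id_take_nth_drop)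
      then have "distinct (take p (idx m n i) @ idx m n i ! p # drop (Suc p) (idx m n i))" using d by metis
      then show ?thesis unfolding rest_def by auto
    qed
    moreover have s1: "set (rest p) \<subseteq> set (idx m n i)"
      unfolding rest_def using p by (auto dest: in_set_takeD in_set_dropD)
    moreover have s2: "idx m n i ! p \<in> set (idx m n i)" using p by simp
    moreover have ni: "(i, x) \<notin> set (idx m n i)" for x using set_idx[of "(i,x)" m n i] by auto
    ultimately show "distinct (lst p)" unfolding lst_def
      by (auto simp: distinct_map inj_on_def)
    show "inj (\<lambda>t. (m + t, 0::nat))" by (auto simp: inj_def)
    fix t
    have fm: "x \<in> set (idx m n i) \<Longrightarrow> fst x < m" for x using set_idx by blast
    have "x \<in> set (lst p) \<Longrightarrow> fst x < m" for x
      unfolding lst_def rest_def using i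
      by (auto dest!: in_set_takeD in_set_dropD) (metis fm nth_mem p)+
    then show "(m + t, 0) \<notin> set (lst p)" by fastforce
  qed
  have Tpw: "T p \<omega> = \<Psi> (\<lambda>t. \<omega> (\<sigma> p t))" if p: "p < ?N" for p \<omega>
  proof -
    have s1: "map (\<lambda>t. \<omega> (\<sigma> p t)) [0..<k] = sample \<omega> i k" unfolding sample_def using \<sigma>1 by auto
    have s2: "map (\<lambda>t. \<omega> (\<sigma> p t)) [Suc k..<Suc k + r] = map \<omega> (rest p)"
    proof (rule nth_equalityI)
      show "length (map (\<lambda>t. \<omega> (\<sigma> p t)) [Suc k..<Suc k + r]) = length (map \<omega> (rest p))" using lenrest[OF p] by (simp del: upt_Suc)
      fix s assume "s < length (map (\<lambda>t. \<omega> (\<sigma> p t)) [Suc k..<Suc k + r])"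
      then have s: "s < r" by (simp del: upt_Suc)
      then show "map (\<lambda>t. \<omega> (\<sigma> p t)) [Suc k..<Suc k + r] ! s = map \<omega> (rest p) ! s"
        using \<sigma>3[OF p s] lenrest[OF p] s by (simp del: upt_Suc add: add.commute)
    qed
    have "\<Psi> (\<lambda>t. \<omega> (\<sigma> p t)) = (h (length (g (sample \<omega> i k))) r (g (sample \<omega> i k) @ [\<omega> (idx m n i ! p)])
          - ecdf (map \<omega> (rest p)) (\<omega> (idx m n i ! p)))\<^sup>2"
      unfolding \<Psi>_def \<gamma>_def W_def restr_map[OF order_refl] using s1 s2 \<sigma>2 by simp
    also have "\<dots> = T p \<omega>" unfolding T_def rest_def using p N by (simp add: take_map drop_map)
    finally show ?thesis by simp
  qed
  have shift: "(\<lambda>\<omega>. \<lambda>t\<in>UNIV. \<omega> (\<sigma> p t)) \<in> PiM UNIV (\<lambda>_::nat\<times>nat. borel::real measure) \<rightarrow>\<^sub>M PiM UNIV (\<lambda>_::nat. borel)" for p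
    by (intro measurable_restrict measurable_component_singleton) auto
  have Tm: "T p \<in> borel_measurable (PiM UNIV (\<lambda>_. borel))" if p: "p < ?N" for p
  proof -
    have ru: "(\<lambda>t\<in>UNIV. \<omega> (\<sigma> p t)) = (\<lambda>t. \<omega> (\<sigma> p t))" for \<omega> :: "nat \<times> nat \<Rightarrow> real" by (rule ext) simp
    have "T p = \<Psi> \<circ> (\<lambda>\<omega>. \<lambda>t\<in>UNIV. \<omega> (\<sigma> p t))" unfolding ru using Tpw[OF p] by (auto simp: fun_eq_iff)
    then show ?thesis using measurable_comp[OF shift \<Psi>m] by simp
  qed
  have Tb: "\<bar>T p \<omega>\<bar> \<le> 1" if p: "p < ?N" for p \<omega> using Tpw[OF p] \<Psi>b by simp
  have NIT: "(\<integral>D. (\<integral>\<omega>. T p \<omega> \<partial>PiM UNIV (\<lambda>_::nat\<times>nat. D)) \<partial>Q) = (\<integral>D. (\<integral>x. \<Psi> x \<partial>PiM UNIV (\<lambda>_::nat. D)) \<partial>Q)"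
    if p: "p < ?N" for p
    using reindex[OF Q inj\<sigma>[OF p] \<Psi>m] Tpw[OF p] by simp
  let ?P = "PP Q :: (nat \<times> nat \<Rightarrow> real) measure"
  have lossT: "loss_given h (((\<lambda>_. id)(i := g)) i (sample \<omega> i (n i))) (others m n ((\<lambda>_. id)(i := g)) i \<omega>)
      = (\<Sum>p<?N. T p \<omega>) / real ?N" for \<omega>
    unfolding loss_given_def others_id T_def k_def by simp
  have sm: "(\<lambda>\<omega>. (\<Sum>p<?N. T p \<omega>) / real ?N) \<in> borel_measurable (PiM UNIV (\<lambda>_. borel))"
    using Tm by (intro borel_measurable_divide borel_measurable_sum) auto
  have sb: "\<bar>(\<Sum>p<?N. T p \<omega>) / real ?N\<bar> \<le> 1" for \<omega>
  proof -
    have "\<bar>\<Sum>p<?N. T p \<omega>\<bar> \<le> (\<Sum>p<?N. \<bar>T p \<omega>\<bar>)" by (rule sum_abs)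
    also have "\<dots> \<le> (\<Sum>p<?N. 1)" using Tb by (intro sum_mono) auto
    finally show ?thesis using N by (simp add: divide_le_eq_1)
  qed
  have "exp_loss Q h m n ((\<lambda>_. id)(i := g)) i = (\<integral>D. (\<integral>\<omega>. (\<Sum>p<?N. T p \<omega>) / real ?N \<partial>PiM UNIV (\<lambda>_::nat\<times>nat. D)) \<partial>Q)"
    unfolding exp_loss_def lossT by simp
  also have "\<dots> = (\<integral>\<omega>. (\<Sum>p<?N. T p \<omega>) / real ?N \<partial>?P)" by (rule NI_eq(1)[OF Q sm sb])
  also have "\<dots> = (\<Sum>p<?N. (\<integral>\<omega>. T p \<omega> \<partial>?P)) / real ?N"
    using NI_eq(2)[OF Q Tm Tb] by simp
  also have "\<dots> = (\<Sum>p<?N. (\<integral>D. (\<integral>x. \<Psi> x \<partial>PiM UNIV (\<lambda>_::nat. D)) \<partial>Q)) / real ?N"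
    using NI_eq(1)[OF Q Tm Tb, symmetric] NIT by simp
  also have "\<dots> = (\<integral>D. (\<integral>x. \<Psi> x \<partial>PiM UNIV (\<lambda>_::nat. D)) \<partial>Q)" using N by simp
  finally show ?thesis unfolding \<Psi>_def \<gamma>_def W_def by simp
qed



lemma NI_nonneg:
  "0 \<le> (\<integral>D. (\<integral>x. (f x :: real)\<^sup>2 \<partial>PiM UNIV (\<lambda>_::'i. D)) \<partial>Q)"
  by (intro Bochner_Integration.integral_nonneg) simp

lemma part1:
  assumes Q: "is_prior Q" and vh: "valid_h Q h" and i: "i < m"
    and N2: "(\<Sum>j\<in>{..<m} - {i}. n j) \<ge> 2" and fi: "fi \<in> list_borel \<rightarrow>\<^sub>M list_borel"
  shows "exp_loss Q h m n (\<lambda>_. id) i \<le> exp_loss Q h m n ((\<lambda>_. id)(i := fi)) i"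
proof -
  define k where "k = n i"
  define r where "r = (\<Sum>j\<in>{..<m} - {i}. n j) - 1"
  have r1: "r \<ge> 1" using N2 unfolding r_def by simp
  define \<gamma> where "\<gamma> y = h (length (fi (map y [0..<k]))) r (fi (map y [0..<k]) @ [y k])" for y
  define W where "W x = ecdf (map x [Suc k..<Suc k + r]) (x k)" for x :: "nat \<Rightarrow> real"
  define g where "g x = h k r (map x [0..<Suc k])" for x :: "nat \<Rightarrow> real"
  have ce: "is_cond_exp Q {..k} g W" using vh r1 unfolding valid_h_def g_def W_def by blast
  have idm: "id \<in> list_borel \<rightarrow>\<^sub>M list_borel" by (simp add: measurable_ident)
  have e1: "exp_loss Q h m n (\<lambda>_. id) i = (\<integral>D. (\<integral>x. (g (restrict x {..k}) - W x)\<^sup>2 \<partial>PiM UNIV (\<lambda>_::nat. D)) \<partial>Q)"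
  proof -
    have "(\<lambda>_::nat. id :: real list \<Rightarrow> real list) = (\<lambda>_. id)(i := id)" by (simp add: fun_eq_iff)
    then have "exp_loss Q h m n (\<lambda>_. id) i = exp_loss Q h m n ((\<lambda>_. id)(i := id)) i" by simp
    also have "\<dots> = (\<integral>D. (\<integral>x. (g (restrict x {..k}) - W x)\<^sup>2 \<partial>PiM UNIV (\<lambda>_::nat. D)) \<partial>Q)"
      unfolding exp_loss_reduce[OF Q vh i N2 idm] g_def W_def k_def r_def
      by (simp add: restr_map)
    finally show ?thesis .
  qed
  have e2: "exp_loss Q h m n ((\<lambda>_. id)(i := fi)) i = (\<integral>D. (\<integral>x. (\<gamma> (restrict x {..k}) - W x)\<^sup>2 \<partial>PiM UNIV (\<lambda>_::nat. D)) \<partial>Q)"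
    unfolding exp_loss_reduce[OF Q vh i N2 fi] \<gamma>_def W_def k_def r_def by simp
  have \<gamma>m: "\<gamma> \<in> borel_measurable (PiM {..k} (\<lambda>_. borel))"
    unfolding \<gamma>_def by (rule gamma_meas[OF vh r1 fi])
  have \<gamma>01: "\<gamma> y \<in> {0..1}" for y unfolding \<gamma>_def by (rule h01[OF vh r1]) simp
  have Wm: "W \<in> borel_measurable (PiM UNIV (\<lambda>_. borel))" unfolding W_def by (rule ecdf_meas)
  have W01: "W x \<in> {0..1}" for x unfolding W_def by (rule ecdf_01)
  show ?thesis unfolding e1 e2 pyth[OF Q ce Wm W01 \<gamma>m \<gamma>01]
    using NI_nonneg[where f="\<lambda>x. \<gamma> (restrict x {..k}) - g (restrict x {..k})" and Q=Q] by simp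
qed



lemma restrict_restrict_sub: "A \<subseteq> B \<Longrightarrow> restrict (restrict \<omega> B) A = restrict \<omega> A"
  by (rule ext) auto

declare upt_Suc[simp del]

lemma part2:
  assumes Q: "is_prior Q" and vh: "valid_h Q h" and nd: "\<not> degenerate Q" and i: "i < m"
    and N2: "(\<Sum>j\<in>{..<m} - {i}. n j) \<ge> 2" and ab: "a < b"
  shows "exp_loss Q h m (n(i := b)) (\<lambda>_. id) i < exp_loss Q h m (n(i := a)) (\<lambda>_. id) i"
proof -
  define r where "r = (\<Sum>j\<in>{..<m} - {i}. n j) - 1"
  have r1: "r \<ge> 1" using N2 unfolding r_def by simp
  define zs where "zs = 1 # [b+2..<b+r+1]"
  define lstC where "lstC k = [2..<k+2] @ [0, 1] @ [b+2..<b+r+1]" for k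
  define \<tau> where "\<tau> k t = (if t < length (lstC k) then lstC k ! t else b + r + 1 + t)" for k t
  define J where "J k = insert 0 {2..<k+2}" for k :: nat
  define g where "g k x = h k r (map x [0..<Suc k])" for k and x :: "nat \<Rightarrow> real"
  define W where "W k x = ecdf (map x [Suc k..<Suc k + r]) (x k)" for k and x :: "nat \<Rightarrow> real"
  define WC where "WC x = ecdf (map x zs) (x 0)" for x :: "nat \<Rightarrow> real"
  define G where "G k y = g k (\<lambda>t\<in>{..k}. y (\<tau> k t))" for k and y :: "nat \<Rightarrow> real"
  define L where "L k = (\<integral>D. (\<integral>\<omega>. (G k (restrict \<omega> (J k)) - WC \<omega>)\<^sup>2 \<partial>PiM UNIV (\<lambda>_::nat. D)) \<partial>Q)" for k
  have lenC: "length (lstC k) = k + r + 1" for k unfolding lstC_def using r1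
    by (simp only: length_append length_upt list.size)
  have \<tau>1: "\<tau> k t = t + 2" if "t < k" for k t using that unfolding \<tau>_def lstC_def by (auto simp: nth_append)
  have \<tau>2: "\<tau> k k = 0" for k unfolding \<tau>_def lstC_def by (auto simp: nth_append)
  have \<tau>3: "map (\<tau> k) [Suc k..<Suc k + r] = zs" for k
  proof (rule nth_equalityI)
    show "length (map (\<tau> k) [Suc k..<Suc k + r]) = length zs" unfolding zs_def using r1 by simp
    fix s assume "s < length (map (\<tau> k) [Suc k..<Suc k + r])"
    then have s: "s < r" by (simp del: upt_Suc)
    have "lstC k ! (Suc k + s) = zs ! s"
      unfolding lstC_def zs_def using s r1 by (cases s) (auto simp: nth_append)
    then show "map (\<tau> k) [Suc k..<Suc k + r] ! s = zs ! s"
      using s lenC[of k] unfolding \<tau>_def by (simp del: upt_Suc)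
  qed
  have \<tau>img: "\<tau> k ` {..k} = J k" for k
  proof
    show "\<tau> k ` {..k} \<subseteq> J k"
    proof
      fix c assume "c \<in> \<tau> k ` {..k}"
      then obtain t where t: "t \<le> k" "c = \<tau> k t" by auto
      then show "c \<in> J k" unfolding J_def by (cases "t < k") (auto simp: \<tau>1 \<tau>2)
    qed
    show "J k \<subseteq> \<tau> k ` {..k}"
    proof
      fix c assume "c \<in> J k"
      then have "c = 0 \<or> (2 \<le> c \<and> c < k + 2)" unfolding J_def by auto
      then show "c \<in> \<tau> k ` {..k}"
      proof
        assume "c = 0" then show ?thesis using \<tau>2[of k] by (metis atMost_iff image_eqI order_refl)
      next
        assume c: "2 \<le> c \<and> c < k + 2"
        then have "c - 2 < k" by linarith
        then have "\<tau> k (c - 2) = c - 2 + 2" by (rule \<tau>1)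
        also have "\<dots> = c" using c by linarith
        finally have "\<tau> k (c - 2) = c" .
        moreover have "c - 2 \<le> k" using c by linarith
        then have "c - 2 \<in> {..k}" by simp
        ultimately show ?thesis by (metis image_eqI)
      qed
    qed
  qed
  have inj\<tau>: "inj (\<tau> k)" if "k \<le> b" for k
    unfolding \<tau>_def
  proof (rule inj_list_ext)
    show "distinct (lstC k)" unfolding lstC_def using that by auto
    show "inj (\<lambda>t. b + r + 1 + t)" by (auto simp: inj_def)
    show "b + r + 1 + t \<notin> set (lstC k)" for t unfolding lstC_def using that r1 by auto
  qed
  have WCm: "WC \<in> borel_measurable (PiM UNIV (\<lambda>_. borel))" unfolding WC_def by (rule ecdf_meas)
  have WC01: "WC x \<in> {0..1}" for x unfolding WC_def by (rule ecdf_01)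
  have Wm: "W k \<in> borel_measurable (PiM UNIV (\<lambda>_. borel))" for k unfolding W_def by (rule ecdf_meas)
  have ceC: "is_cond_exp Q (J k) (G k) WC" if "k \<le> b" for k
  proof -
    have ce: "is_cond_exp Q {..k} (g k) (W k)" using vh r1 unfolding valid_h_def g_def W_def by blast
    have WW: "(\<lambda>\<omega>. W k (\<lambda>t. \<omega> (\<tau> k t))) = WC"
    proof (rule ext)
      fix \<omega> :: "nat \<Rightarrow> real"
      have "map (\<lambda>t. \<omega> (\<tau> k t)) [Suc k..<Suc k + r] = map \<omega> zs"
        by (simp only: \<tau>3[of k, symmetric] map_map o_def)
      then show "W k (\<lambda>t. \<omega> (\<tau> k t)) = WC \<omega>" unfolding W_def WC_def using \<tau>2[of k] by simp
    qed
    show ?thesis using CE_reindex[OF Q ce inj\<tau>[OF that] Wm] unfolding WW \<tau>img G_def .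
  qed
  have Gm: "G k \<in> borel_measurable (PiM (J k) (\<lambda>_. borel))" if "k \<le> b" for k
    using ceC[OF that] unfolding is_cond_exp_def by blast
  have G01: "G k y \<in> {0..1}" if "k \<le> b" for k y
    using ceC[OF that] unfolding is_cond_exp_def by blast
  have sumeq: "(\<Sum>j\<in>{..<m} - {i}. (n(i := k)) j) = (\<Sum>j\<in>{..<m} - {i}. n j)" for k
    by (rule sum.cong) auto
  have EL: "exp_loss Q h m (n(i := k)) (\<lambda>_. id) i = L k" if kb: "k \<le> b" for k
  proof -
    have N2': "(\<Sum>j\<in>{..<m} - {i}. (n(i := k)) j) \<ge> 2" using N2 sumeq by simp
    have idm: "id \<in> list_borel \<rightarrow>\<^sub>M list_borel" by (simp add: measurable_ident)
    have "(\<lambda>_::nat. id :: real list \<Rightarrow> real list) = (\<lambda>_. id)(i := id)" by (simp add: fun_eq_iff)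
    then have "exp_loss Q h m (n(i := k)) (\<lambda>_. id) i = exp_loss Q h m (n(i := k)) ((\<lambda>_. id)(i := id)) i" by simp
    also have "\<dots> = (\<integral>D. (\<integral>x. (g k (restrict x {..k}) - W k x)\<^sup>2 \<partial>PiM UNIV (\<lambda>_::nat. D)) \<partial>Q)"
      unfolding exp_loss_reduce[OF Q vh i N2' idm] g_def W_def sumeq r_def[symmetric]
      by (simp add: restr_map upt_Suc)
    also have "\<dots> = (\<integral>D. (\<integral>\<omega>. (\<lambda>x. (g k (restrict x {..k}) - W k x)\<^sup>2) (\<lambda>t. \<omega> (\<tau> k t)) \<partial>PiM UNIV (\<lambda>_::nat. D)) \<partial>Q)"
    proof (rule reindex[OF Q inj\<tau>[OF kb], symmetric])
      have "g k \<in> borel_measurable (PiM {..k} (\<lambda>_. borel))" unfolding g_def by (rule h_meas[OF vh r1])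
      then have "(\<lambda>x. g k (restrict x {..k})) \<in> borel_measurable (PiM UNIV (\<lambda>_. borel))"
        using measurable_compose[OF restr_meas] by (simp add: o_def)
      then show "(\<lambda>x. (g k (restrict x {..k}) - W k x)\<^sup>2) \<in> borel_measurable (PiM UNIV (\<lambda>_. borel))"
        using Wm[of k] by measurable
    qed
    also have "\<dots> = L k"
    proof -
      have "restrict (\<lambda>t. \<omega> (\<tau> k t)) {..k} = (\<lambda>t\<in>{..k}. restrict \<omega> (J k) (\<tau> k t))" for \<omega> :: "nat \<Rightarrow> real"
        using \<tau>img[of k] by (intro ext) auto
      moreover have "W k (\<lambda>t. \<omega> (\<tau> k t)) = WC \<omega>" for \<omega> :: "nat \<Rightarrow> real"
      proof -
        have "map (\<lambda>t. \<omega> (\<tau> k t)) [Suc k..<Suc k + r] = map \<omega> zs"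
          by (simp only: \<tau>3[of k, symmetric] map_map o_def)
        then show ?thesis unfolding W_def WC_def using \<tau>2[of k] by simp
      qed
      ultimately show ?thesis unfolding L_def G_def by simp
    qed
    finally show ?thesis .
  qed
  have Jsub: "J k \<subseteq> J k'" if "k \<le> k'" for k k' unfolding J_def using that by auto
  have step: "L k = L k' + (\<integral>D. (\<integral>\<omega>. (G k (restrict \<omega> (J k)) - G k' (restrict \<omega> (J k')))\<^sup>2 \<partial>PiM UNIV (\<lambda>_::nat. D)) \<partial>Q)"
    if "k \<le> k'" "k' \<le> b" for k k'
  proof -
    have kb: "k \<le> b" using that by simp
    have \<gamma>m: "(\<lambda>y. G k (restrict y (J k))) \<in> borel_measurable (PiM (J k') (\<lambda>_. borel))"
      using measurable_compose[OF measurable_restrict_subset[OF Jsub[OF that(1)]] Gm[OF kb]] by (simp add: o_def)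
    have rr: "restrict (restrict \<omega> (J k')) (J k) = restrict \<omega> (J k)" for \<omega> :: "nat \<Rightarrow> real"
      by (rule restrict_restrict_sub[OF Jsub[OF that(1)]])
    show ?thesis using pyth[OF Q ceC[OF that(2)] WCm WC01 \<gamma>m G01[OF kb]] unfolding rr L_def .
  qed
  define D1 where "D1 = (\<integral>D. (\<integral>\<omega>. (G a (restrict \<omega> (J a)) - G (Suc a) (restrict \<omega> (J (Suc a))))\<^sup>2 \<partial>PiM UNIV (\<lambda>_::nat. D)) \<partial>Q)"
  have La: "L a = L (Suc a) + D1" unfolding D1_def using step[of a "Suc a"] ab by simp
  have Lb: "L (Suc a) \<ge> L b"
    using step[of "Suc a" b] ab NI_nonneg[where Q=Q and f="\<lambda>\<omega>. G (Suc a) (restrict \<omega> (J (Suc a))) - G b (restrict \<omega> (J b))"]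
    by simp
  have D1pos: "D1 > 0"
  proof (rule ccontr)
    assume "\<not> D1 > 0"
    moreover have "0 \<le> D1" unfolding D1_def by (rule NI_nonneg)
    ultimately have D10: "D1 = 0" by linarith
    define F where "F \<omega> = (G a (restrict \<omega> (J a)) - G (Suc a) (restrict \<omega> (J (Suc a))))\<^sup>2" for \<omega> :: "nat \<Rightarrow> real"
    have Ga: "(\<lambda>\<omega>. G a (restrict \<omega> (J a))) \<in> borel_measurable (PiM UNIV (\<lambda>_. borel))"
      using measurable_compose[OF restr_meas Gm] ab by (simp add: o_def)
    have Ga1: "(\<lambda>\<omega>. G (Suc a) (restrict \<omega> (J (Suc a)))) \<in> borel_measurable (PiM UNIV (\<lambda>_. borel))"
      using measurable_compose[OF restr_meas Gm] ab by (simp add: o_def)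
    have Fm: "F \<in> borel_measurable (PiM UNIV (\<lambda>_. borel))" unfolding F_def using Ga Ga1 by measurable
    have Fb: "\<bar>F \<omega>\<bar> \<le> 1" for \<omega>
    proof -
      have "\<bar>G a (restrict \<omega> (J a)) - G (Suc a) (restrict \<omega> (J (Suc a)))\<bar> \<le> 1"
        using G01[of a "restrict \<omega> (J a)"] G01[of "Suc a" "restrict \<omega> (J (Suc a))"] ab by auto
      then show ?thesis unfolding F_def using power_le_one[of "\<bar>G a (restrict \<omega> (J a)) - G (Suc a) (restrict \<omega> (J (Suc a)))\<bar>" 2] by simp
    qed
    have "(\<integral>\<omega>. F \<omega> \<partial>(PP Q :: (nat \<Rightarrow> real) measure)) = 0"
      using D10 NI_eq(1)[OF Q Fm Fb] unfolding D1_def F_def by simp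
    then have "AE \<omega> in (PP Q :: (nat \<Rightarrow> real) measure). F \<omega> = 0"
      using integral_nonneg_eq_0_iff_AE[OF NI_eq(2)[OF Q Fm Fb]] unfolding F_def by simp
    then have AE1: "AE D in Q. AE \<omega> in PiM UNIV (\<lambda>_::nat. D). F \<omega> = 0"
    proof (subst (asm) PP_def, subst (asm) AE_bind[OF kernel_meas_Q[OF Q]])
      show "Measurable.pred (PiM UNIV (\<lambda>_. borel)) (\<lambda>\<omega>. F \<omega> = 0)" using Fm by measurable
    qed
    have "degenerate Q"
      unfolding degenerate_def
    proof (intro exI conjI)
      have dis: "set zs \<inter> J a = {}" "0 \<notin> set zs" "zs \<noteq> []" "hd zs = 1"
        unfolding zs_def J_def using ab by auto
      have dis1: "set zs \<inter> J (Suc a) = {}"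
        unfolding zs_def J_def using ab by auto
      have e1: "J a = insert 0 {2..<a+2}" unfolding J_def by simp
      have e2: "J (Suc a) = insert 0 {2..<a+3}" unfolding J_def by (simp add: numeral_3_eq_3)
      show "is_cond_exp Q (insert 0 {2..<a+2}) (G a) (\<lambda>\<omega>. indicator {x. x \<le> \<omega> 0} (\<omega> 1))"
        using CE_exch[OF Q _ dis(3,1,2), of "G a"] ceC[of a] ab unfolding WC_def e1 dis(4) by simp
      show "is_cond_exp Q (insert 0 {2..<a+3}) (G (Suc a)) (\<lambda>\<omega>. indicator {x. x \<le> \<omega> 0} (\<omega> 1))"
        using CE_exch[OF Q _ dis(3) dis1 dis(2), of "G (Suc a)"] ceC[of "Suc a"] ab unfolding WC_def e2 dis(4) by simp
      show "AE D in Q. AE \<omega> in PiM UNIV (\<lambda>_::nat. D). G a (restrict \<omega> (insert 0 {2..<a+2})) = G (Suc a) (restrict \<omega> (insert 0 {2..<a+3}))"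
        using AE1
      proof (rule eventually_mono)
        fix D assume "AE \<omega> in PiM UNIV (\<lambda>_::nat. D). F \<omega> = 0"
        then show "AE \<omega> in PiM UNIV (\<lambda>_::nat. D). G a (restrict \<omega> (insert 0 {2..<a+2})) = G (Suc a) (restrict \<omega> (insert 0 {2..<a+3}))"
          by (rule eventually_mono) (simp add: F_def e1 e2)
      qed
    qed
    then show False using nd by simp
  qed
  have "exp_loss Q h m (n(i := b)) (\<lambda>_. id) i = L b" using EL[of b] by simp
  also have "\<dots> < L a" using La Lb D1pos by simp
  also have "\<dots> = exp_loss Q h m (n(i := a)) (\<lambda>_. id) i" using EL[of a] ab by simp
  finally show ?thesis .
qed

declare upt_Suc[simp]


theorem theorem1:
  fixes m :: nat and Q :: "real measure measure" and h :: "nat \<Rightarrow> nat \<Rightarrow> real list \<Rightarrow> real"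
  assumes "m \<ge> 2"
    and "is_prior Q"
    and "valid_h Q h"
  shows "(\<forall>(n :: nat \<Rightarrow> nat) i (fi :: real list \<Rightarrow> real list).
            i < m \<longrightarrow> (\<Sum>j\<in>{..<m} - {i}. n j) \<ge> 2 \<longrightarrow> fi \<in> list_borel \<rightarrow>\<^sub>M list_borel \<longrightarrow>
            exp_loss Q h m n (\<lambda>_. id) i \<le> exp_loss Q h m n ((\<lambda>_. id)(i := fi)) i)
       \<and> (\<not> degenerate Q \<longrightarrow>
          (\<forall>(n :: nat \<Rightarrow> nat) i a b.
            i < m \<longrightarrow> (\<Sum>j\<in>{..<m} - {i}. n j) \<ge> 2 \<longrightarrow> a < b \<longrightarrow>
            exp_loss Q h m (n(i := b)) (\<lambda>_. id) i < exp_loss Q h m (n(i := a)) (\<lambda>_. id) i))"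
  using part1[OF assms(2,3)] part2[OF assms(2,3)] by blast

end
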